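(* In the contention game with $n=3$ players and $k=2$ channels under acknowledgement-based feedback, the anonymous protocol $f^2$ (in every slot, regardless of history, a pending player transmits on channel 1 with probability $1/2$ and on channel 2 with probability $1/2$, and never stays idle) is an equilibrium protocol, and the expected latency of each player under it is $8/3$.
   Context: Contention game: $n$ players, channel set $K=\{1,\dots,k\}$, discrete time slots $t=1,2,\dots$. Each player has one packet; initially all players are pending. In each slot a pending player chooses (possibly at random) an action in $A=\{0,1,\dots,k\}$, where $0$ means no transmission and $a\in K$ means transmitting on channel $a$. If exactly one player transmits on a channel in a slot, her transmission succeeds and she leaves the game; if two or more transmit on the same channel they collide, all fail and remain pending. $X_{i,t}$ is player $i$'s action at slot $t$ and $h_{i,t}=(X_{i,1},\dots,X_{i,t})$ her personal history. A protocol for player $i$ is a sequence of decision rules, the rule for slot $t$ mapping the information available to $i$ to a probability distribution on $A$. The latency $T_i$ of player $i$ is the slot in which she transmits successfully; each player wants to minimize her expected latency. Acknowledgement-based feedback: after a slot, only a player who attempted transmission learns whether she succeeded; decision rules depend only on the personal history $h_{i,t-1}$. A profile $(f_1,\dots,f_n)$ is an equilibrium if for every player $i$, every slot $t$ and every history, player $i$ cannot decrease her expected latency (conditional on that history) by unilaterally deviating to another protocol from $t$ on. An anonymous protocol is one used by all players whose decision rules do not depend on the player's identity; it is an equilibrium protocol if the profile in which all players use it is an equilibrium. *)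

theory Defs
  imports "HOL-Probability.Probability"
begin

text \<open>Players are 0,...,n-1; actions are naturals, 0 = idle, a in {1..k} = transmit on channel a.
  A protocol (decision rules) maps the personal history (list of own past actions; its length
  is t-1 for slot t) to a distribution over actions.
  A global state records, for each player, Some h if she is pending with personal history h,
  and None if she already transmitted successfully (or is not a player).\<close>

type_synonym protocol = "nat list \<Rightarrow> nat pmf"
type_synonym gstate = "nat \<Rightarrow> nat list option"

definition valid_protocol :: "nat \<Rightarrow> protocol \<Rightarrow> bool" where
  "valid_protocol k g \<longleftrightarrow> (\<forall>h. set_pmf (g h) \<subseteq> {0..k})"

definition succeeds :: "nat set \<Rightarrow> (nat \<Rightarrow> nat) \<Rightarrow> nat \<Rightarrow> bool" where
  "succeeds P a j \<longleftrightarrow> a j \<noteq> 0 \<and> (\<forall>j'\<in>P. j' \<noteq> j \<longrightarrow> a j' \<noteq> a j)"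

definition step :: "nat \<Rightarrow> (nat \<Rightarrow> protocol) \<Rightarrow> gstate \<Rightarrow> gstate pmf" where
  "step n F \<sigma> =
     (let P = {j. j < n \<and> \<sigma> j \<noteq> None} in
      map_pmf (\<lambda>a j. if j \<in> P then (if succeeds P a j then None else Some (the (\<sigma> j) @ [a j]))
                      else None)
              (Pi_pmf P 0 (\<lambda>j. F j (the (\<sigma> j)))))"

primrec state_after :: "nat \<Rightarrow> (nat \<Rightarrow> protocol) \<Rightarrow> nat \<Rightarrow> gstate pmf" where
  "state_after n F 0 = return_pmf (\<lambda>j. if j < n then Some [] else None)"
| "state_after n F (Suc s) = bind_pmf (state_after n F s) (step n F)"

text \<open>Expected latency of player i conditional on the event H that she is pending at the
  beginning of slot length h + 1 with personal history h.  Computed via the tail-sum formula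
  E[T 1_H] = sum_s P(T > s and H), where for s < length h the event is H itself and for
  s >= length h it is: pending after s slots with history extending h.  (Value in ennreal, so
  infinite latency is allowed.)\<close>
definition cond_latency :: "nat \<Rightarrow> (nat \<Rightarrow> protocol) \<Rightarrow> nat \<Rightarrow> nat list \<Rightarrow> ennreal" where
  "cond_latency n F i h =
     (\<Sum>s. ennreal (measure_pmf.prob (state_after n F (max s (length h)))
                      {\<sigma>. \<exists>h'. \<sigma> i = Some h' \<and> take (length h) h' = h}))
     / ennreal (measure_pmf.prob (state_after n F (length h)) {\<sigma>. \<sigma> i = Some h})"

definition expected_latency :: "nat \<Rightarrow> (nat \<Rightarrow> protocol) \<Rightarrow> nat \<Rightarrow> ennreal" where
  "expected_latency n F i = cond_latency n F i []"

text \<open>Conditioning on the personal history h is realised by letting the player play h: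
  since the others' behaviour depends only on their own histories, this gives the
  conditional law given h (and it makes sense also for histories off the equilibrium path).\<close>
definition force :: "nat list \<Rightarrow> protocol \<Rightarrow> protocol" where
  "force h g = (\<lambda>h'. if length h' < length h then return_pmf (h ! length h') else g h')"

definition is_equilibrium :: "nat \<Rightarrow> nat \<Rightarrow> (nat \<Rightarrow> protocol) \<Rightarrow> bool" where
  "is_equilibrium n k F \<longleftrightarrow>
     (\<forall>i<n. \<forall>h. set h \<subseteq> {0..k} \<longrightarrow>
        measure_pmf.prob (state_after n (F(i := force h (F i))) (length h)) {\<sigma>. \<sigma> i = Some h} > 0 \<longrightarrow>
        (\<forall>g. valid_protocol k g \<longrightarrow>
           cond_latency n (F(i := force h (F i))) i h \<le> cond_latency n (F(i := force h g)) i h))"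

definition equilibrium_protocol :: "nat \<Rightarrow> nat \<Rightarrow> protocol \<Rightarrow> bool" where
  "equilibrium_protocol n k f \<longleftrightarrow> valid_protocol k f \<and> is_equilibrium n k (\<lambda>_. f)"

definition f2 :: protocol where
  "f2 = (\<lambda>h. pmf_of_set {1, 2})"

end

theory Submission
  imports Defs
begin

definition vec3 :: "nat \<Rightarrow> nat \<Rightarrow> nat \<Rightarrow> nat \<Rightarrow> nat" where
  "vec3 y0 y1 y2 = (\<lambda>j. if j = 0 then y0 else if j = 1 then y1 else if j = 2 then y2 else 0)"

lemma nn_fin:
  fixes u :: "'a \<Rightarrow> real"
  assumes "finite S" "set_pmf M \<subseteq> S" "\<And>x. 0 \<le> u x"
  shows "(\<integral>\<^sup>+x. ennreal (u x) \<partial>measure_pmf M) = ennreal (\<Sum>x\<in>S. u x * pmf M x)"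
proof -
  have "(\<integral>\<^sup>+x. ennreal (u x) \<partial>measure_pmf M) = (\<Sum>x\<in>S. ennreal (u x) * pmf M x)"
    using assms by (intro nn_integral_measure_pmf_support) (auto simp: set_pmf_eq)
  also have "\<dots> = (\<Sum>x\<in>S. ennreal (u x * pmf M x))"
    using assms by (intro sum.cong) (auto simp: ennreal_mult)
  also have "\<dots> = ennreal (\<Sum>x\<in>S. u x * pmf M x)"
    using assms by (intro sum_ennreal) auto
  finally show ?thesis .
qed

lemma Pi3: "Pi_pmf {0,1,2} (0::nat) Q =
  bind_pmf (Q 0) (\<lambda>y0. bind_pmf (Q 1) (\<lambda>y1. bind_pmf (Q 2) (\<lambda>y2. return_pmf (vec3 y0 y1 y2))))"
proof -
  have e: "((\<lambda>_. 0)(2 := y2, Suc 0 := y1, 0 := y0)) = vec3 y0 y1 y2" for y0 y1 y2 :: nat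
    by (auto simp: vec3_def)
  show ?thesis
    by (simp add: Pi_pmf_insert' bind_return_pmf bind_assoc_pmf e del: fun_upd_apply)
qed

lemma nn_Pi3:
  fixes \<phi> :: "(nat \<Rightarrow> nat) \<Rightarrow> real"
  assumes "finite SA" "finite SB" "finite SC" "set_pmf (Q 0) \<subseteq> SA" "set_pmf (Q 1) \<subseteq> SB"
    "set_pmf (Q 2) \<subseteq> SC" "\<And>a. 0 \<le> \<phi> a"
  shows "(\<integral>\<^sup>+a. ennreal (\<phi> a) \<partial>measure_pmf (Pi_pmf {0,1,2} 0 Q)) =
     ennreal (\<Sum>y0\<in>SA. \<Sum>y1\<in>SB. \<Sum>y2\<in>SC. \<phi> (vec3 y0 y1 y2) * pmf (Q 2) y2 * pmf (Q 1) y1 * pmf (Q 0) y0)"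
  unfolding Pi3 using assms
  by (simp add: nn_fin sum_nonneg sum_distrib_right)

definition pend :: "gstate \<Rightarrow> nat set" where
  "pend \<sigma> = {j. j < 3 \<and> \<sigma> j \<noteq> None}"

definition upd :: "gstate \<Rightarrow> (nat \<Rightarrow> nat) \<Rightarrow> gstate" where
  "upd \<sigma> a = (\<lambda>j. if j \<in> pend \<sigma> then
      (if succeeds (pend \<sigma>) a j then None else Some (the (\<sigma> j) @ [a j])) else None)"

lemma step3: "step 3 F \<sigma> = map_pmf (upd \<sigma>) (Pi_pmf {0,1,2} 0 (\<lambda>j. F j (the (\<sigma> j))))"
proof -
  let ?P = "{j. j < (3::nat) \<and> \<sigma> j \<noteq> None}"
  have sub: "?P \<subseteq> {0,1,2}" by auto
  show ?thesis
    unfolding step_def Let_def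
    apply (subst Pi_pmf_subset[OF _ sub])
     apply simp
    apply (simp add: map_pmf_comp)
    apply (intro map_pmf_cong refl ext)
    apply (auto simp: upd_def succeeds_def pend_def)
    done
qed

definition oth :: "nat \<Rightarrow> gstate \<Rightarrow> nat" where
  "oth i \<sigma> = (if i \<noteq> 0 \<and> \<sigma> 0 \<noteq> None then 1 else 0) + (if i \<noteq> 1 \<and> \<sigma> 1 \<noteq> None then 1 else 0)
     + (if i \<noteq> 2 \<and> \<sigma> 2 \<noteq> None then 1 else 0)"

definition vl :: "nat \<Rightarrow> real" where
  "vl m = (if m = 0 then 1 else if m = 1 then 2 else 8/3)"

definition Phi :: "nat list \<Rightarrow> nat \<Rightarrow> gstate \<Rightarrow> real" where
  "Phi h i \<sigma> = (case \<sigma> i of None \<Rightarrow> 0 | Some h' \<Rightarrow> if take (length h) h' = h then vl (oth i \<sigma>) else 0)"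

lemma Phi_nonneg[simp]: "0 \<le> Phi h i \<sigma>"
  by (auto simp: Phi_def vl_def split: option.split)

lemma Phi_le: "Phi h i \<sigma> \<le> 8/3"
  by (auto simp: Phi_def vl_def split: option.split)

lemma ball3: "(\<forall>j\<in>{j. j < (3::nat) \<and> R j}. S j) \<longleftrightarrow> ((R 0 \<longrightarrow> S 0) \<and> (R 1 \<longrightarrow> S 1) \<and> (R 2 \<longrightarrow> S 2))"
proof -
  have "j < 3 \<longleftrightarrow> j = 0 \<or> j = 1 \<or> j = (2::nat)" for j by auto
  then show ?thesis by auto
qed

lemma int_step:
  "(\<integral>\<^sup>+\<sigma>'. ennreal (Phi h i \<sigma>') \<partial>measure_pmf (step 3 F \<sigma>)) =
   ennreal (\<Sum>y0\<in>{0,1,2}. \<Sum>y1\<in>{0,1,2}. \<Sum>y2\<in>{0,1,2}. Phi h i (upd \<sigma> (vec3 y0 y1 y2))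
      * pmf (F 2 (the (\<sigma> 2))) y2 * pmf (F 1 (the (\<sigma> 1))) y1 * pmf (F 0 (the (\<sigma> 0))) y0)"
  if "\<And>j. j < 3 \<Longrightarrow> set_pmf (F j (the (\<sigma> j))) \<subseteq> {0,1,2}"
  unfolding step3 nn_integral_map_pmf
  by (rule nn_Pi3[where \<phi> = "\<lambda>a. Phi h i (upd \<sigma> a)" and Q = "\<lambda>j. F j (the (\<sigma> j))"
      and SA = "{0,1,2}" and SB = "{0,1,2}" and SC = "{0,1,2}"]) (use that in auto)


lemma pmf_f2: "pmf (pmf_of_set {1,2::nat}) y = (if y = 1 \<or> y = 2 then 1/2 else 0)"
  by simp

lemma sum3: "(\<Sum>y\<in>{0,1,2::nat}. g y) = g 0 + g 1 + g 2"
  by (simp add: add.assoc)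


lemma pend_eq: "pend \<sigma> = (if \<sigma> 0 \<noteq> None then {0} else {}) \<union> (if \<sigma> 1 \<noteq> None then {1} else {})
   \<union> (if \<sigma> 2 \<noteq> None then {2} else {})"
proof -
  have l3: "j < 3 \<Longrightarrow> j = 0 \<or> j = 1 \<or> j = (2::nat)" for j by auto
  show ?thesis unfolding pend_def
    by (cases "\<sigma> 0"; cases "\<sigma> 1"; cases "\<sigma> 2") (auto dest: l3)
qed





lemma key0:
  fixes F :: "nat \<Rightarrow> protocol"
  assumes "\<sigma> 0 = Some old" "take (length h) old = h" "\<forall>j x. j \<noteq> 0 \<longrightarrow> F j x = pmf_of_set {1,2}"
    "pmf (F 0 old) 0 + pmf (F 0 old) 1 + pmf (F 0 old) 2 = 1" "\<And>x. take (length h) (old @ [x]) = h"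
  shows "Phi h 0 \<sigma> \<le> 1 + (\<Sum>y0\<in>{0,1,2}. \<Sum>y1\<in>{0,1,2}. \<Sum>y2\<in>{0,1,2}. Phi h 0 (upd \<sigma> (vec3 y0 y1 y2))
      * pmf (F 2 (the (\<sigma> 2))) y2 * pmf (F 1 (the (\<sigma> 1))) y1 * pmf (F 0 (the (\<sigma> 0))) y0) \<and>
     (F 0 old = pmf_of_set {1,2} \<longrightarrow> 1 + (\<Sum>y0\<in>{0,1,2}. \<Sum>y1\<in>{0,1,2}. \<Sum>y2\<in>{0,1,2}. Phi h 0 (upd \<sigma> (vec3 y0 y1 y2))
      * pmf (F 2 (the (\<sigma> 2))) y2 * pmf (F 1 (the (\<sigma> 1))) y1 * pmf (F 0 (the (\<sigma> 0))) y0) = Phi h 0 \<sigma>)"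
  using assms pmf_nonneg[of "F 0 old" 0]
  apply (cases "\<sigma> 1"; cases "\<sigma> 2")
  apply (simp_all only: sum3)
  apply (simp_all add: pmf_f2)
  apply (simp_all add: Phi_def upd_def succeeds_def oth_def vl_def vec3_def pend_eq)
  apply (auto simp: algebra_simps)
  using pmf_nonneg[of "F 0 old" 0] by linarith

lemma key1:
  fixes F :: "nat \<Rightarrow> protocol"
  assumes "\<sigma> 1 = Some old" "take (length h) old = h" "\<forall>j x. j \<noteq> 1 \<longrightarrow> F j x = pmf_of_set {1,2}"
    "pmf (F 1 old) 0 + pmf (F 1 old) 1 + pmf (F 1 old) 2 = 1" "\<And>x. take (length h) (old @ [x]) = h"
  shows "Phi h 1 \<sigma> \<le> 1 + (\<Sum>y0\<in>{0,1,2}. \<Sum>y1\<in>{0,1,2}. \<Sum>y2\<in>{0,1,2}. Phi h 1 (upd \<sigma> (vec3 y0 y1 y2))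
      * pmf (F 2 (the (\<sigma> 2))) y2 * pmf (F 1 (the (\<sigma> 1))) y1 * pmf (F 0 (the (\<sigma> 0))) y0) \<and>
     (F 1 old = pmf_of_set {1,2} \<longrightarrow> 1 + (\<Sum>y0\<in>{0,1,2}. \<Sum>y1\<in>{0,1,2}. \<Sum>y2\<in>{0,1,2}. Phi h 1 (upd \<sigma> (vec3 y0 y1 y2))
      * pmf (F 2 (the (\<sigma> 2))) y2 * pmf (F 1 (the (\<sigma> 1))) y1 * pmf (F 0 (the (\<sigma> 0))) y0) = Phi h 1 \<sigma>)"
  using assms pmf_nonneg[of "F 1 old" 0]
  apply (cases "\<sigma> 0"; cases "\<sigma> 2")
  apply (simp_all only: sum3)
  apply (simp_all add: pmf_f2)
  apply (simp_all add: Phi_def upd_def succeeds_def oth_def vl_def vec3_def pend_eq)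
  apply (auto simp: algebra_simps)
  using pmf_nonneg[of "F (Suc 0) old" 0] by linarith

lemma key2:
  fixes F :: "nat \<Rightarrow> protocol"
  assumes "\<sigma> 2 = Some old" "take (length h) old = h" "\<forall>j x. j \<noteq> 2 \<longrightarrow> F j x = pmf_of_set {1,2}"
    "pmf (F 2 old) 0 + pmf (F 2 old) 1 + pmf (F 2 old) 2 = 1" "\<And>x. take (length h) (old @ [x]) = h"
  shows "Phi h 2 \<sigma> \<le> 1 + (\<Sum>y0\<in>{0,1,2}. \<Sum>y1\<in>{0,1,2}. \<Sum>y2\<in>{0,1,2}. Phi h 2 (upd \<sigma> (vec3 y0 y1 y2))
      * pmf (F 2 (the (\<sigma> 2))) y2 * pmf (F 1 (the (\<sigma> 1))) y1 * pmf (F 0 (the (\<sigma> 0))) y0) \<and>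
     (F 2 old = pmf_of_set {1,2} \<longrightarrow> 1 + (\<Sum>y0\<in>{0,1,2}. \<Sum>y1\<in>{0,1,2}. \<Sum>y2\<in>{0,1,2}. Phi h 2 (upd \<sigma> (vec3 y0 y1 y2))
      * pmf (F 2 (the (\<sigma> 2))) y2 * pmf (F 1 (the (\<sigma> 1))) y1 * pmf (F 0 (the (\<sigma> 0))) y0) = Phi h 2 \<sigma>)"
  using assms pmf_nonneg[of "F 2 old" 0]
  apply (cases "\<sigma> 0"; cases "\<sigma> 1")
  apply (simp_all only: sum3)
  apply (simp_all add: pmf_f2)
  apply (simp_all add: Phi_def upd_def succeeds_def oth_def vl_def vec3_def pend_eq)
  apply (auto simp: algebra_simps)
  using pmf_nonneg[of "F 2 old" 0] by linarith

lemma enn_aux1: "0 \<le> (R::real) \<Longrightarrow> x \<le> 1 + R \<Longrightarrow> ennreal x \<le> 1 + ennreal R"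
  by (metis ennreal_1 ennreal_leI ennreal_plus zero_less_one_class.zero_le_one)

lemma enn_aux2: "0 \<le> (R::real) \<Longrightarrow> 1 + R = x \<Longrightarrow> 1 + ennreal R = ennreal x"
  by (metis ennreal_1 ennreal_plus zero_less_one_class.zero_le_one)

lemma bellman:
  fixes F :: "nat \<Rightarrow> protocol"
  assumes "i < 3" "\<sigma> i = Some old" "take (length h) old = h" "\<forall>j. j \<noteq> i \<longrightarrow> F j = f2"
    "\<forall>x. set_pmf (F i x) \<subseteq> {0,1,2}"
  shows "ennreal (Phi h i \<sigma>) \<le> 1 + (\<integral>\<^sup>+\<sigma>'. ennreal (Phi h i \<sigma>') \<partial>measure_pmf (step 3 F \<sigma>))"
    and "F i old = pmf_of_set {1,2} \<Longrightarrow>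
          1 + (\<integral>\<^sup>+\<sigma>'. ennreal (Phi h i \<sigma>') \<partial>measure_pmf (step 3 F \<sigma>)) = ennreal (Phi h i \<sigma>)"
proof -
  let ?R = "(\<Sum>y0\<in>{0,1,2}. \<Sum>y1\<in>{0,1,2}. \<Sum>y2\<in>{0,1,2}. Phi h i (upd \<sigma> (vec3 y0 y1 y2))
      * pmf (F 2 (the (\<sigma> 2))) y2 * pmf (F 1 (the (\<sigma> 1))) y1 * pmf (F 0 (the (\<sigma> 0))) y0)"
  have sp: "set_pmf (F j (the (\<sigma> j))) \<subseteq> {0,1,2}" if "j < 3" for j
    using assms(4,5) by (cases "j = i") (auto simp: f2_def)
  have int: "(\<integral>\<^sup>+\<sigma>'. ennreal (Phi h i \<sigma>') \<partial>measure_pmf (step 3 F \<sigma>)) = ennreal ?R"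
    by (rule int_step) (use sp in auto)
  have R0: "0 \<le> ?R" by (intro sum_nonneg mult_nonneg_nonneg) auto
  have lh: "length h \<le> length old"
  proof -
    have "length (take (length h) old) = length h" using assms(3) by simp
    then show ?thesis by simp
  qed
  have tk: "take (length h) (old @ [x]) = h" for x
    using assms(3) lh by simp
  have qs: "pmf (F i old) 0 + pmf (F i old) 1 + pmf (F i old) 2 = 1"
    using sum_pmf_eq_1[OF _ assms(5)[rule_format, of old]] by (simp add: add.assoc)
  have f2: "\<forall>j x. j \<noteq> i \<longrightarrow> F j x = pmf_of_set {1,2}" using assms(4) by (simp add: f2_def)
  have i3: "i = 0 \<or> i = 1 \<or> i = 2" using assms(1) by auto
  have K: "Phi h i \<sigma> \<le> 1 + ?R \<and> (F i old = pmf_of_set {1,2} \<longrightarrow> 1 + ?R = Phi h i \<sigma>)"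
  proof -
    { assume iI: "i = 0"
      have a: "\<sigma> 0 = Some old" using assms(2) iI by simp
      have b: "\<forall>j x. j \<noteq> 0 \<longrightarrow> F j x = pmf_of_set {1,2}" using f2 iI by simp
      have c: "pmf (F 0 old) 0 + pmf (F 0 old) 1 + pmf (F 0 old) 2 = 1" using qs iI by simp
      have ?thesis unfolding iI by (rule key0[where \<sigma>=\<sigma> and old=old and h=h and F=F, OF a assms(3) b c]) (fact tk) }
    moreover
    { assume iI: "i = 1"
      have a: "\<sigma> 1 = Some old" using assms(2) iI by simp
      have b: "\<forall>j x. j \<noteq> 1 \<longrightarrow> F j x = pmf_of_set {1,2}" using f2 iI by simp
      have c: "pmf (F 1 old) 0 + pmf (F 1 old) 1 + pmf (F 1 old) 2 = 1" using qs iI by simp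
      have ?thesis unfolding iI by (rule key1[where \<sigma>=\<sigma> and old=old and h=h and F=F, OF a assms(3) b c]) (fact tk) }
    moreover
    { assume iI: "i = 2"
      have a: "\<sigma> 2 = Some old" using assms(2) iI by simp
      have b: "\<forall>j x. j \<noteq> 2 \<longrightarrow> F j x = pmf_of_set {1,2}" using f2 iI by simp
      have c: "pmf (F 2 old) 0 + pmf (F 2 old) 1 + pmf (F 2 old) 2 = 1" using qs iI by simp
      have ?thesis unfolding iI by (rule key2[where \<sigma>=\<sigma> and old=old and h=h and F=F, OF a assms(3) b c]) (fact tk) }
    ultimately show ?thesis using i3 by blast
  qed
  show "ennreal (Phi h i \<sigma>) \<le> 1 + (\<integral>\<^sup>+\<sigma>'. ennreal (Phi h i \<sigma>') \<partial>measure_pmf (step 3 F \<sigma>))"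
    unfolding int using K R0 enn_aux1 by blast
  show "F i old = pmf_of_set {1,2} \<Longrightarrow>
          1 + (\<integral>\<^sup>+\<sigma>'. ennreal (Phi h i \<sigma>') \<partial>measure_pmf (step 3 F \<sigma>)) = ennreal (Phi h i \<sigma>)"
    unfolding int using K R0 enn_aux2 by blast
qed

lemma step_zero:
  assumes "\<forall>old. \<sigma> i = Some old \<longrightarrow> length h \<le> length old \<and> take (length h) old \<noteq> h"
  shows "(\<integral>\<^sup>+\<sigma>'. ennreal (Phi h i \<sigma>') \<partial>measure_pmf (step 3 F \<sigma>)) = 0"
proof -
  have "Phi h i (upd \<sigma> a) = 0" for a
  proof (cases "\<sigma> i")
    case None
    then show ?thesis by (simp add: Phi_def upd_def pend_def)
  next
    case (Some old)
    with assms have l: "length h \<le> length old" and t: "take (length h) old \<noteq> h" by auto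
    have "take (length h) (old @ [x]) \<noteq> h" for x using l t by simp
    then show ?thesis using Some by (simp add: Phi_def upd_def)
  qed
  then show ?thesis by (simp add: step3)
qed

lemma step_some:
  assumes "\<sigma> \<in> set_pmf (step n F \<tau>)" "\<sigma> j = Some x"
  shows "\<exists>y c. \<tau> j = Some y \<and> x = y @ [c]"
  using assms by (auto simp: step_def Let_def split: if_splits)

lemma hist_len:
  assumes "\<sigma> \<in> set_pmf (state_after n F s)" "\<sigma> j = Some x"
  shows "length x = s"
  using assms
proof (induction s arbitrary: \<sigma> j x)
  case 0
  then show ?case by (auto split: if_splits)
next
  case (Suc s)
  then obtain \<tau> where t: "\<tau> \<in> set_pmf (state_after n F s)" "\<sigma> \<in> set_pmf (step n F \<tau>)" by auto
  from step_some[OF t(2) Suc.prems(2)] obtain y c where "\<tau> j = Some y" "x = y @ [c]" by blast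
  with Suc.IH[OF t(1)] show ?case by simp
qed

definition FF :: "nat \<Rightarrow> nat list \<Rightarrow> protocol \<Rightarrow> nat \<Rightarrow> protocol" where
  "FF i h p = (\<lambda>_. f2)(i := force h p)"

definition Aev :: "nat list \<Rightarrow> nat \<Rightarrow> gstate set" where
  "Aev h i = {\<sigma>. \<exists>h'. \<sigma> i = Some h' \<and> take (length h) h' = h}"

definition WW :: "nat \<Rightarrow> nat list \<Rightarrow> protocol \<Rightarrow> nat \<Rightarrow> ennreal" where
  "WW i h p s = (\<integral>\<^sup>+\<sigma>. ennreal (Phi h i \<sigma>) \<partial>measure_pmf (state_after 3 (FF i h p) s))"

definition PP :: "nat \<Rightarrow> nat list \<Rightarrow> protocol \<Rightarrow> nat \<Rightarrow> ennreal" where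
  "PP i h p s = emeasure (measure_pmf (state_after 3 (FF i h p) s)) (Aev h i)"

lemma valid_FF:
  assumes "set h \<subseteq> {0..2}" "valid_protocol 2 p"
  shows "\<forall>x. set_pmf (FF i h p i x) \<subseteq> {0,1,2}"
proof
  fix x
  have e: "{0..2::nat} = {0,1,2}" by auto
  show "set_pmf (FF i h p i x) \<subseteq> {0,1,2}"
  proof (cases "length x < length h")
    case True
    then have "h ! length x \<in> set h" by simp
    then have "h ! length x \<in> {0,1,2}" using assms(1) e by blast
    then show ?thesis using True by (simp add: FF_def force_def)
  next
    case False
    then show ?thesis using assms(2) by (auto simp: FF_def force_def valid_protocol_def e)
  qed
qed

lemma FF_other: "\<forall>j. j \<noteq> i \<longrightarrow> FF i h p j = f2"
  by (simp add: FF_def)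

lemma Phi_notA: "\<sigma> \<notin> Aev h i \<Longrightarrow> Phi h i \<sigma> = 0"
  by (auto simp: Phi_def Aev_def split: option.split)

lemma PP_int: "PP i h p s = (\<integral>\<^sup>+\<sigma>. indicator (Aev h i) \<sigma> \<partial>measure_pmf (state_after 3 (FF i h p) s))"
  unfolding PP_def by (rule nn_integral_indicator[symmetric]) simp

lemma WW_Suc: "WW i h p (Suc s) = (\<integral>\<^sup>+\<sigma>. (\<integral>\<^sup>+\<sigma>'. ennreal (Phi h i \<sigma>') \<partial>measure_pmf (step 3 (FF i h p) \<sigma>))
     \<partial>measure_pmf (state_after 3 (FF i h p) s))"
  unfolding WW_def by simp

lemma g_step:
  assumes "i < 3" "set h \<subseteq> {0..2}" "valid_protocol 2 p"
  shows "WW i h p s \<le> PP i h p s + WW i h p (Suc s)"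
proof -
  have "PP i h p s + WW i h p (Suc s) = (\<integral>\<^sup>+\<sigma>. indicator (Aev h i) \<sigma> +
     (\<integral>\<^sup>+\<sigma>'. ennreal (Phi h i \<sigma>') \<partial>measure_pmf (step 3 (FF i h p) \<sigma>)) \<partial>measure_pmf (state_after 3 (FF i h p) s))"
    unfolding PP_int WW_Suc by (rule nn_integral_add[symmetric]) auto
  moreover have "WW i h p s \<le> \<dots>"
    unfolding WW_def
  proof (rule nn_integral_mono)
    fix \<sigma>
    show "ennreal (Phi h i \<sigma>) \<le> indicator (Aev h i) \<sigma> +
     (\<integral>\<^sup>+\<sigma>'. ennreal (Phi h i \<sigma>') \<partial>measure_pmf (step 3 (FF i h p) \<sigma>))"
    proof (cases "\<sigma> \<in> Aev h i")
      case True
      then obtain old where o: "\<sigma> i = Some old" "take (length h) old = h" by (auto simp: Aev_def)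
      show ?thesis using bellman(1)[where F="FF i h p" and i=i and \<sigma>=\<sigma> and old=old and h=h, OF assms(1) o FF_other[of i h p] valid_FF[OF assms(2,3), of i]] True by simp
    next
      case False
      then show ?thesis by (simp add: Phi_notA)
    qed
  qed
  ultimately show ?thesis by simp
qed

lemma valid_f2: "valid_protocol 2 f2"
  by (auto simp: valid_protocol_def f2_def)

lemma f_step:
  assumes "i < 3" "length h \<le> s" "set h \<subseteq> {0..2}"
  shows "PP i h f2 s + WW i h f2 (Suc s) \<le> WW i h f2 s"
proof -
  have "PP i h f2 s + WW i h f2 (Suc s) = (\<integral>\<^sup>+\<sigma>. indicator (Aev h i) \<sigma> +
     (\<integral>\<^sup>+\<sigma>'. ennreal (Phi h i \<sigma>') \<partial>measure_pmf (step 3 (FF i h f2) \<sigma>)) \<partial>measure_pmf (state_after 3 (FF i h f2) s))"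
    unfolding PP_int WW_Suc by (rule nn_integral_add[symmetric]) auto
  moreover have "\<dots> \<le> WW i h f2 s"
    unfolding WW_def
  proof (rule nn_integral_mono_AE, unfold AE_measure_pmf_iff, intro ballI)
    fix \<sigma> assume sup: "\<sigma> \<in> set_pmf (state_after 3 (FF i h f2) s)"
    show "indicator (Aev h i) \<sigma> +
     (\<integral>\<^sup>+\<sigma>'. ennreal (Phi h i \<sigma>') \<partial>measure_pmf (step 3 (FF i h f2) \<sigma>)) \<le> ennreal (Phi h i \<sigma>)"
    proof (cases "\<sigma> \<in> Aev h i")
      case True
      then obtain old where o: "\<sigma> i = Some old" "take (length h) old = h" by (auto simp: Aev_def)
      have "length old = s" using hist_len[OF sup o(1)] .
      then have ff: "FF i h f2 i old = pmf_of_set {1,2}"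
        using assms(2) by (simp add: FF_def force_def f2_def)
      have v: "\<forall>x. set_pmf (FF i h f2 i x) \<subseteq> {0,1,2}"
        by (rule valid_FF[OF assms(3) valid_f2])
      show ?thesis using bellman(2)[where F="FF i h f2" and i=i and \<sigma>=\<sigma> and old=old and h=h, OF assms(1) o FF_other[of i h f2] v ff] True by simp
    next
      case False
      have "\<forall>old. \<sigma> i = Some old \<longrightarrow> length h \<le> length old \<and> take (length h) old \<noteq> h"
        using False hist_len[OF sup] assms(2) by (auto simp: Aev_def)
      then show ?thesis using False by (simp add: step_zero)
    qed
  qed
  ultimately show ?thesis by simp
qed

lemma W_bound: "WW i h p s \<le> ennreal (8/3) * PP i h p s"
proof -
  have "WW i h p s \<le> (\<integral>\<^sup>+\<sigma>. ennreal (8/3) * indicator (Aev h i) \<sigma> \<partial>measure_pmf (state_after 3 (FF i h p) s))"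
    unfolding WW_def
  proof (rule nn_integral_mono)
    fix \<sigma>
    show "ennreal (Phi h i \<sigma>) \<le> ennreal (8/3) * indicator (Aev h i) \<sigma>"
    proof (cases "\<sigma> \<in> Aev h i")
      case True
      then show ?thesis using ennreal_leI[OF Phi_le[of h i \<sigma>]] by simp
    next
      case False
      then show ?thesis by (simp add: Phi_notA)
    qed
  qed
  also have "\<dots> = ennreal (8/3) * PP i h p s"
    unfolding PP_def by (rule nn_integral_cmult_indicator) simp
  finally show ?thesis .
qed

lemma prefix_eq:
  "s \<le> length h \<Longrightarrow> state_after 3 (FF i h p) s = state_after 3 (FF i h q) s"
proof (induction s)
  case 0
  then show ?case by simp
next
  case (Suc s)
  then have IH: "state_after 3 (FF i h p) s = state_after 3 (FF i h q) s" by simp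
  show ?case
  proof (simp only: state_after.simps, rule bind_pmf_cong[OF IH])
    fix \<sigma> assume sup: "\<sigma> \<in> set_pmf (state_after 3 (FF i h q) s)"
    show "step 3 (FF i h p) \<sigma> = step 3 (FF i h q) \<sigma>"
      unfolding step_def Let_def
    proof (intro arg_cong2[where f=map_pmf] refl Pi_pmf_cong)
      fix j assume j: "j \<in> {j. j < 3 \<and> \<sigma> j \<noteq> None}"
      show "FF i h p j (the (\<sigma> j)) = FF i h q j (the (\<sigma> j))"
      proof (cases "j = i")
        case True
        from j obtain x where x: "\<sigma> j = Some x" by auto
        have "length x = s" using hist_len[OF sup x] .
        then show ?thesis using True x Suc.prems by (simp add: FF_def force_def)
      next
        case False
        then show ?thesis by (simp add: FF_def)
      qed
    qed
  qed
qed

lemma PP_eq: "PP i h p s = ennreal (measure_pmf.prob (state_after 3 (FF i h p) s) (Aev h i))"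
  unfolding PP_def by (rule measure_pmf.emeasure_eq_measure)

lemma num_upper:
  assumes "i < 3" "set h \<subseteq> {0..2}"
  shows "(\<Sum>s. PP i h f2 (max s (length h))) \<le> of_nat (length h) * PP i h f2 (length h) + WW i h f2 (length h)"
proof -
  let ?L = "length h"
  have part: "(\<Sum>s<?L+T. PP i h f2 (max s ?L)) + WW i h f2 (?L+T) \<le> of_nat ?L * PP i h f2 ?L + WW i h f2 ?L" for T
  proof (induction T)
    case 0
    have "(\<Sum>s<?L. PP i h f2 (max s ?L)) = (\<Sum>s<?L. PP i h f2 ?L)"
      by (rule sum.cong) auto
    then show ?case by simp
  next
    case (Suc T)
    have "(\<Sum>s<?L+Suc T. PP i h f2 (max s ?L)) + WW i h f2 (?L+Suc T)
        = (\<Sum>s<?L+T. PP i h f2 (max s ?L)) + (PP i h f2 (?L+T) + WW i h f2 (Suc (?L+T)))"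
      by (simp add: add.assoc)
    also have "\<dots> \<le> (\<Sum>s<?L+T. PP i h f2 (max s ?L)) + WW i h f2 (?L+T)"
      by (intro add_left_mono f_step assms) simp
    also have "\<dots> \<le> of_nat ?L * PP i h f2 ?L + WW i h f2 ?L" by (rule Suc.IH)
    finally show ?case .
  qed
  show ?thesis
  proof (rule suminf_le_const)
    show "summable (\<lambda>s. PP i h f2 (max s ?L))" by simp
    fix n
    have "(\<Sum>s<n. PP i h f2 (max s ?L)) \<le> (\<Sum>s<?L+n. PP i h f2 (max s ?L))"
      by (rule sum_mono2) auto
    also have "\<dots> \<le> (\<Sum>s<?L+n. PP i h f2 (max s ?L)) + WW i h f2 (?L+n)" by simp
    also have "\<dots> \<le> of_nat ?L * PP i h f2 ?L + WW i h f2 ?L" by (rule part)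
    finally show "(\<Sum>s<n. PP i h f2 (max s ?L)) \<le> of_nat ?L * PP i h f2 ?L + WW i h f2 ?L" .
  qed
qed

lemma num_lower:
  assumes "i < 3" "set h \<subseteq> {0..2}" "valid_protocol 2 p"
  shows "of_nat (length h) * PP i h p (length h) + WW i h p (length h) \<le> (\<Sum>s. PP i h p (max s (length h)))"
proof -
  let ?L = "length h"
  let ?C = "of_nat ?L * PP i h p ?L + WW i h p ?L"
  have part: "?C \<le> (\<Sum>s<?L+T. PP i h p (max s ?L)) + WW i h p (?L+T)" for T
  proof (induction T)
    case 0
    have "(\<Sum>s<?L. PP i h p (max s ?L)) = (\<Sum>s<?L. PP i h p ?L)"
      by (rule sum.cong) auto
    then show ?case by simp
  next
    case (Suc T)
    have "?C \<le> (\<Sum>s<?L+T. PP i h p (max s ?L)) + WW i h p (?L+T)" by (rule Suc.IH)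
    also have "\<dots> \<le> (\<Sum>s<?L+T. PP i h p (max s ?L)) + (PP i h p (?L+T) + WW i h p (Suc (?L+T)))"
      by (intro add_left_mono g_step assms)
    also have "\<dots> = (\<Sum>s<?L+Suc T. PP i h p (max s ?L)) + WW i h p (?L+Suc T)"
      by (simp add: add.assoc)
    finally show ?case .
  qed
  define r where "r s = measure_pmf.prob (state_after 3 (FF i h p) (max s ?L)) (Aev h i)" for s
  have PPr: "PP i h p (max s ?L) = ennreal (r s)" for s unfolding r_def by (rule PP_eq)
  show ?thesis
  proof (cases "(\<Sum>s. PP i h p (max s ?L)) = top")
    case True
    then show ?thesis by simp
  next
    case False
    then have "(\<Sum>s. ennreal (r s)) \<noteq> top" unfolding PPr .
    then have sr: "summable r" by (intro summable_suminf_not_top) (auto simp: r_def)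
    then have r0: "r \<longlonglongrightarrow> 0" by (rule summable_LIMSEQ_zero)
    let ?X = "\<lambda>M. (\<Sum>s<M. PP i h p (max s ?L)) + ennreal (8/3 * r M)"
    have lim: "?X \<longlonglongrightarrow> (\<Sum>s. PP i h p (max s ?L)) + ennreal (8/3 * 0)"
      by (intro tendsto_add summable_LIMSEQ summableI tendsto_ennrealI tendsto_mult tendsto_const r0)
    have "?C \<le> (\<Sum>s. PP i h p (max s ?L)) + ennreal (8/3 * 0)"
    proof (rule LIMSEQ_le_const[OF lim], intro exI allI impI)
      fix M assume M: "?L \<le> M"
      then obtain T where T: "M = ?L + T" using le_Suc_ex by blast
      have "?C \<le> (\<Sum>s<M. PP i h p (max s ?L)) + WW i h p M" using part[of T] T by simp
      also have "WW i h p M \<le> ennreal (8/3) * PP i h p M" by (rule W_bound)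
      also have "PP i h p M = ennreal (r M)" using PPr[of M] M by simp
      also have "ennreal (8/3) * ennreal (r M) = ennreal (8/3 * r M)"
        by (rule ennreal_mult[symmetric]) (auto simp: r_def)
      finally show "?C \<le> ?X M" by (simp add: add_left_mono)
    qed
    then show ?thesis by simp
  qed
qed

lemma cl_eq: "cond_latency 3 (FF i h p) i h = (\<Sum>s. PP i h p (max s (length h))) /
   ennreal (measure_pmf.prob (state_after 3 (FF i h p) (length h)) {\<sigma>. \<sigma> i = Some h})"
  unfolding cond_latency_def PP_eq Aev_def ..

lemma main_ineq:
  assumes "i < 3" "set h \<subseteq> {0..2}" "valid_protocol 2 g"
  shows "cond_latency 3 (FF i h f2) i h \<le> cond_latency 3 (FF i h g) i h"
proof -
  let ?L = "length h"
  have st: "state_after 3 (FF i h f2) ?L = state_after 3 (FF i h g) ?L" by (rule prefix_eq) simp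
  have "(\<Sum>s. PP i h f2 (max s ?L)) \<le> of_nat ?L * PP i h f2 ?L + WW i h f2 ?L"
    by (rule num_upper[OF assms(1,2)])
  also have "\<dots> = of_nat ?L * PP i h g ?L + WW i h g ?L"
    unfolding PP_def WW_def st ..
  also have "\<dots> \<le> (\<Sum>s. PP i h g (max s ?L))" by (rule num_lower[OF assms])
  finally have N: "(\<Sum>s. PP i h f2 (max s ?L)) \<le> (\<Sum>s. PP i h g (max s ?L))" .
  show ?thesis unfolding cl_eq st by (rule divide_right_mono_ennreal[OF N])
qed

lemma exp_lat:
  assumes "i < 3"
  shows "expected_latency 3 (\<lambda>_. f2) i = ennreal (8/3)"
proof -
  have F: "(\<lambda>_. f2) = FF i [] f2" by (auto simp: FF_def force_def)
  have h: "set [] \<subseteq> {0..2::nat}" by simp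
  have W0: "WW i [] f2 0 = ennreal (8/3)"
  proof -
    have "oth i (\<lambda>j. if j < 3 then Some [] else None) = 2"
      using assms by (cases "i = 0"; cases "i = 1") (auto simp: oth_def)
    then show ?thesis by (simp add: WW_def Phi_def vl_def assms)
  qed
  have "(\<Sum>s. PP i [] f2 (max s (length []))) = ennreal (8/3)"
    using num_upper[OF assms h] num_lower[OF assms h valid_f2] W0 by (auto intro: order.antisym)
  then show ?thesis unfolding expected_latency_def F cl_eq using assms by (simp add: indicator_def divide_ennreal_def)
qed

theorem theorem1:
  shows "equilibrium_protocol 3 2 f2 \<and> (\<forall>i<3. expected_latency 3 (\<lambda>_. f2) i = ennreal (8/3))"
proof
  show "equilibrium_protocol 3 2 f2"
    unfolding equilibrium_protocol_def is_equilibrium_def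
  proof (intro conjI valid_f2 allI impI)
    fix i :: nat and h :: "nat list" and g
    assume a: "i < 3" "set h \<subseteq> {0..2}" "valid_protocol 2 g"
    show "cond_latency 3 ((\<lambda>_. f2)(i := force h f2)) i h \<le> cond_latency 3 ((\<lambda>_. f2)(i := force h g)) i h"
      using main_ineq[OF a] by (simp add: FF_def)
  qed
  show "\<forall>i<3. expected_latency 3 (\<lambda>_. f2) i = ennreal (8/3)"
    using exp_lat by blast
qed

end
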